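(* Let $\mathcal{G}:\mathbb{R}^L\to\mathbb{R}^K$ be $C^2$ and suppose there is $\Lambda>0$ with $\|\nabla\mathcal{G}(u)\|_2\le\Lambda$, $\|\mathcal{H}(|\mathcal{G}|_\Gamma^2)(u)\|_2\le\Lambda$ and $\|\partial_i\nabla\mathcal{G}(u)\|_2\le\Lambda$ for all $u\in\mathbb{R}^L$, $1\le i\le L$. Let $\rho(u,t)=Z(t)^{-1}\exp(-\tfrac t2|y-\mathcal{G}(u)|_\Gamma^2)\rho_{\mathrm{prior}}(u)$, $t\in[0,1]$, with $\rho_{\mathrm{prior}}=\mathcal{N}(u_0,\Gamma_0)$. Then $t\mapsto\mathbb{E}_{\rho(t)}\big(|y-\mathcal{G}(u)|_\Gamma^2\big)$ is nonincreasing on $[0,1]$.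
   Context: $y\in\mathbb{R}^K$, $u_0\in\mathbb{R}^L$; $\Gamma$ ($K\times K$) and $\Gamma_0$ ($L\times L$) are symmetric positive definite; $|x|_\Gamma^2=x^\top\Gamma^{-1}x$; $Z(t)$ is the normalizing constant; $\mathcal{H}$ is the Hessian and $[\nabla\mathcal{G}]_{ij}=\partial_j\mathcal{G}_i$. (This $\rho$ is the strong solution of the weighted ensemble Kalman inversion Fokker–Planck equation.) *)

theory Defs
  imports "HOL-Analysis.Analysis"
begin

definition wnorm2 :: "real^'n^'n \<Rightarrow> real^'n \<Rightarrow> real" where
  "wnorm2 Gam x = x \<bullet> (matrix_inv Gam *v x)"

definition spd :: "real^'n^'n \<Rightarrow> bool" where
  "spd A \<longleftrightarrow> transpose A = A \<and> (\<forall>x. x \<noteq> 0 \<longrightarrow> x \<bullet> (A *v x) > 0)"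

definition dpart :: "(real^'l \<Rightarrow> 'b::real_normed_vector) \<Rightarrow> real^'l \<Rightarrow> 'l \<Rightarrow> 'b" where
  "dpart F u i = frechet_derivative F (at u) (axis i 1)"

text \<open>Jacobian [nabla G]_{ij} = d_j G_i, as a K x L matrix.\<close>
definition jac :: "(real^'l \<Rightarrow> real^'k) \<Rightarrow> real^'l \<Rightarrow> real^'l^'k" where
  "jac G u = jacobian G (at u)"

definition grad :: "(real^'l \<Rightarrow> real) \<Rightarrow> real^'l \<Rightarrow> real^'l" where
  "grad f u = (\<chi> j. dpart f u j)"

definition hess :: "(real^'l \<Rightarrow> real) \<Rightarrow> real^'l \<Rightarrow> real^'l^'l" where
  "hess f u = jac (grad f) u"

definition opnorm2 :: "real^'m^'n \<Rightarrow> real" where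
  "opnorm2 A = onorm (\<lambda>x. A *v x)"

definition C2 :: "(real^'l \<Rightarrow> real^'k) \<Rightarrow> bool" where
  "C2 G \<longleftrightarrow> (\<forall>u. G differentiable at u) \<and> (\<forall>u. jac G differentiable at u)
      \<and> (\<forall>i. continuous_on UNIV (\<lambda>u. dpart (jac G) u i))"

definition gauss_pdf :: "real^'l \<Rightarrow> real^'l^'l \<Rightarrow> real^'l \<Rightarrow> real" where
  "gauss_pdf u0 Gam0 u =
     exp (- wnorm2 Gam0 (u - u0) / 2) / sqrt ((2 * pi) ^ CARD('l) * det Gam0)"

definition Zc :: "(real^'l \<Rightarrow> real^'k) \<Rightarrow> real^'k \<Rightarrow> real^'k^'k \<Rightarrow> real^'l \<Rightarrow> real^'l^'l \<Rightarrow> real \<Rightarrow> real" where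
  "Zc G y Gam u0 Gam0 t =
     (\<integral>u. exp (- t / 2 * wnorm2 Gam (y - G u)) * gauss_pdf u0 Gam0 u \<partial>lborel)"

definition rho :: "(real^'l \<Rightarrow> real^'k) \<Rightarrow> real^'k \<Rightarrow> real^'k^'k \<Rightarrow> real^'l \<Rightarrow> real^'l^'l \<Rightarrow> real^'l \<Rightarrow> real \<Rightarrow> real" where
  "rho G y Gam u0 Gam0 u t =
     exp (- t / 2 * wnorm2 Gam (y - G u)) * gauss_pdf u0 Gam0 u / Zc G y Gam u0 Gam0 t"

definition misfit_exp :: "(real^'l \<Rightarrow> real^'k) \<Rightarrow> real^'k \<Rightarrow> real^'k^'k \<Rightarrow> real^'l \<Rightarrow> real^'l^'l \<Rightarrow> real \<Rightarrow> real" where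
  "misfit_exp G y Gam u0 Gam0 t =
     (\<integral>u. wnorm2 Gam (y - G u) * rho G y Gam u0 Gam0 u t \<partial>lborel)"

end

theory Submission
  imports Defs "HOL-Probability.Distributions"
begin


lemma spd_inv:
  fixes A :: "real^'n^'n"
  assumes "spd A"
  shows "A ** matrix_inv A = mat 1" "matrix_inv A ** A = mat 1"
proof -
  have "\<forall>x. A *v x = 0 \<longrightarrow> x = 0"
    using assms unfolding spd_def by (metis inner_zero_right less_irrefl)
  then have "invertible A"
    using matrix_left_invertible_ker invertible_left_inverse by blast
  then have "\<exists>A'. A ** A' = mat 1 \<and> A' ** A = mat 1" unfolding invertible_def by blast
  then have "A ** matrix_inv A = mat 1 \<and> matrix_inv A ** A = mat 1"
    unfolding matrix_inv_def by (rule someI_ex)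
  then show "A ** matrix_inv A = mat 1" "matrix_inv A ** A = mat 1" by auto
qed

lemma spd_wnorm_pos:
  fixes A :: "real^'n^'n"
  assumes "spd A" "x \<noteq> 0"
  shows "wnorm2 A x > 0"
proof -
  let ?v = "matrix_inv A *v x"
  have x: "x = A *v ?v"
    using spd_inv(1)[OF assms(1)] by (metis matrix_vector_mul_assoc matrix_vector_mul_lid)
  have "?v \<noteq> 0" using x assms(2) by (metis matrix_vector_mult_0_right)
  then have "?v \<bullet> (A *v ?v) > 0" using assms(1) unfolding spd_def by blast
  then show ?thesis unfolding wnorm2_def using x by (metis inner_commute)
qed

lemma spd_wnorm_nonneg:
  fixes A :: "real^'n^'n"
  assumes "spd A"
  shows "wnorm2 A x \<ge> 0"
  using spd_wnorm_pos[OF assms, of x] by (cases "x = 0") (auto simp: wnorm2_def)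

lemma wnorm2_scale: "wnorm2 A (c *\<^sub>R x) = c^2 * wnorm2 A x"
  unfolding wnorm2_def by (simp add: matrix_vector_mult_scaleR power2_eq_square)

lemma wnorm2_cont: "continuous_on S (wnorm2 A)"
  unfolding wnorm2_def by (intro continuous_intros)

lemma spd_wnorm_lower:
  fixes A :: "real^'n^'n"
  assumes "spd A"
  obtains lam where "lam > 0" "\<And>x. wnorm2 A x \<ge> lam * (norm x)^2"
proof -
  obtain i :: 'n where True by blast
  have ne: "sphere (0::real^'n) 1 \<noteq> {}"
    using norm_axis_1[of i] by (metis mem_sphere_0 empty_iff)
  obtain z where z: "z \<in> sphere 0 1" "\<And>w. w \<in> sphere 0 1 \<Longrightarrow> wnorm2 A z \<le> wnorm2 A w"
    using continuous_attains_inf[OF compact_sphere ne wnorm2_cont] by blast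
  have lp: "wnorm2 A z > 0" using z(1) spd_wnorm_pos[OF assms, of z] by (metis mem_sphere_0 norm_zero zero_neq_one)
  show ?thesis
  proof (rule that[OF lp])
    fix x :: "real^'n"
    show "wnorm2 A x \<ge> wnorm2 A z * (norm x)^2"
    proof (cases "x = 0")
      case True then show ?thesis by (simp add: wnorm2_def)
    next
      case False
      let ?w = "(1 / norm x) *\<^sub>R x"
      have "?w \<in> sphere 0 1" using False by simp
      then have "wnorm2 A z \<le> wnorm2 A ?w" using z(2) by blast
      also have "\<dots> = wnorm2 A x / (norm x)^2" by (simp add: wnorm2_scale power_divide)
      finally show ?thesis using False by (simp add: field_simps)
    qed
  qed
qed



lemma gauss1_integrable:
  fixes c :: real assumes "c > 0"
  shows "integrable lborel (\<lambda>x::real. exp (- c * x^2))"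
proof -
  define \<sigma> where "\<sigma> = sqrt (1 / (2 * c))"
  have s2: "2 * \<sigma>^2 = 1 / c" using assms by (simp add: \<sigma>_def)
  have eq: "exp (- c * x^2) = sqrt (2 * pi * \<sigma>^2) * normal_density 0 \<sigma> x" for x
  proof -
    have "\<sigma>^2 > 0" using assms by (simp add: \<sigma>_def)
    then have sp: "sqrt (2 * pi * \<sigma>^2) > 0" and s0: "\<sigma> \<noteq> 0" by auto
    have "- x\<^sup>2 / (2 * \<sigma>\<^sup>2) = - c * x^2" using s2 assms by simp
    then show ?thesis unfolding normal_density_def using sp s0 by (simp del: real_sqrt_gt_0_iff)
  qed
  have sg: "\<sigma> > 0" using assms by (simp add: \<sigma>_def)
  show ?thesis unfolding eq
    by (intro integrable_mult_right integrable_normal_density sg)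
qed

lemma gaussn_integrable:
  fixes c :: real assumes "c > 0"
  shows "integrable lborel (\<lambda>x::'a::euclidean_space. exp (- c * (norm x)^2))"
proof -
  have fin: "(\<integral>\<^sup>+x. ennreal (exp (- c * x^2)) \<partial>lborel) < \<infinity>"
    using gauss1_integrable[OF assms] unfolding integrable_iff_bounded by simp
  have eq: "ennreal (exp (- c * (norm x)^2)) = (\<Prod>b\<in>Basis. ennreal (exp (- c * (x \<bullet> b)^2)))" for x :: 'a
  proof -
    have "(norm x)^2 = (\<Sum>b\<in>Basis. (x \<bullet> b)^2)"
      unfolding power2_norm_eq_inner by (subst euclidean_inner) (simp add: power2_eq_square)
    then have "exp (- c * (norm x)^2) = (\<Prod>b\<in>Basis. exp (- c * (x \<bullet> b)^2))"
      by (simp add: sum_distrib_left exp_sum[symmetric] sum_negf)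
    then show ?thesis by (simp add: prod_ennreal)
  qed
  have "(\<integral>\<^sup>+x. ennreal (exp (- c * (norm x)^2)) \<partial>(lborel::'a measure))
      = (\<Prod>b\<in>(Basis::'a set). (\<integral>\<^sup>+x. ennreal (exp (- c * x^2)) \<partial>lborel))"
    unfolding eq by (rule nn_integral_lborel_prod) auto
  also have "\<dots> < \<infinity>" using fin by (simp add: power_less_top_ennreal)
  finally show ?thesis unfolding integrable_iff_bounded
    by (auto intro!: borel_measurable_continuous_onI continuous_intros)
qed


lemma integral_pos_lborel:
  fixes f :: "'a::euclidean_space \<Rightarrow> real"
  assumes "integrable lborel f" "\<And>x. f x > 0"
  shows "integral\<^sup>L lborel f > 0"
proof -
  have nn: "\<And>x. 0 \<le> f x" using assms(2) less_imp_le by blast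
  have ge: "integral\<^sup>L lborel f \<ge> 0" by (rule Bochner_Integration.integral_nonneg) (rule nn)
  have "integral\<^sup>L lborel f \<noteq> 0"
  proof
    assume "integral\<^sup>L lborel f = 0"
    moreover have "AE x in lborel. 0 \<le> f x" by (rule AE_I2) (rule nn)
    ultimately have h: "AE x in lborel. f x = 0"
      using integral_nonneg_eq_0_iff_AE[OF assms(1)] by blast
    have "AE x in (lborel::'a measure). False"
      using h by eventually_elim (metis assms(2) less_irrefl)
    then have "ae_filter (lborel::'a measure) = bot" using trivial_limit_def by blast
    then have "emeasure (lborel::'a measure) (space lborel) = 0" using ae_filter_eq_bot_iff by blast
    then show False by simp
  qed
  then show ?thesis using ge by linarith
qed

lemma cheb:
  fixes M :: "'a measure" and P m w :: "'a \<Rightarrow> real"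
  assumes im: "integrable M m" and iPm: "integrable M (\<lambda>x. P x * m x)"
   and wm: "w \<in> borel_measurable M" and m0: "\<And>x. 0 \<le> m x" and w0: "\<And>x. 0 \<le> w x" and w1: "\<And>x. w x \<le> 1"
   and anti: "\<And>u v. (P u - P v) * (w u - w v) \<le> 0"
  shows "(\<integral>x. P x * w x * m x \<partial>M) * (\<integral>x. m x \<partial>M) \<le> (\<integral>x. P x * m x \<partial>M) * (\<integral>x. w x * m x \<partial>M)"
proof -
  have iwm: "integrable M (\<lambda>x. w x * m x)"
  proof (rule Bochner_Integration.integrable_bound[OF im])
    show "(\<lambda>x. w x * m x) \<in> borel_measurable M"
      using borel_measurable_times[OF wm borel_measurable_integrable[OF im]] .
    show "AE x in M. norm (w x * m x) \<le> norm (m x)"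
      using w0 w1 m0 by (auto intro!: AE_I2 simp: abs_mult mult_left_le_one_le)
  qed
  have iPwm0: "integrable M (\<lambda>x. w x * (P x * m x))"
  proof (rule Bochner_Integration.integrable_bound[OF iPm])
    show "(\<lambda>x. w x * (P x * m x)) \<in> borel_measurable M"
      using borel_measurable_times[OF wm borel_measurable_integrable[OF iPm]] .
    show "AE x in M. norm (w x * (P x * m x)) \<le> norm (P x * m x)"
      using w0 w1 by (auto intro!: AE_I2 simp: abs_mult mult_left_le_one_le)
  qed
  have iPwm: "integrable M (\<lambda>x. P x * w x * m x)"
    using iPwm0 by (simp add: ac_simps)
  define A' where "A' = (\<integral>x. P x * w x * m x \<partial>M)"
  define Z' where "Z' = (\<integral>x. w x * m x \<partial>M)"
  define A where "A = (\<integral>x. P x * m x \<partial>M)"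
  define Z where "Z = (\<integral>x. m x \<partial>M)"
  define F where "F v = A' - P v * Z' - w v * A + P v * w v * Z" for v
  have i2: "integrable M (\<lambda>u. c * (w u * m u))" for c using iwm by (rule Bochner_Integration.integrable_mult_right)
  have i3: "integrable M (\<lambda>u. c * (P u * m u))" for c using iPm by (rule Bochner_Integration.integrable_mult_right)
  have i4: "integrable M (\<lambda>u. c * m u)" for c using im by (rule Bochner_Integration.integrable_mult_right)
  have i5: "integrable M (\<lambda>u. c * (P u * w u * m u))" for c using iPwm by (rule Bochner_Integration.integrable_mult_right)
  have inner: "(\<integral>u. (P u - P v) * (w u - w v) * m u \<partial>M) = F v" for v
  proof -
    have "(\<integral>u. (P u - P v) * (w u - w v) * m u \<partial>M) =
       (\<integral>u. P u * w u * m u - P v * (w u * m u) - w v * (P u * m u) + (P v * w v) * m u \<partial>M)"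
      by (rule Bochner_Integration.integral_cong[OF refl]) (simp add: algebra_simps)
    also have "\<dots> = (\<integral>u. P u * w u * m u - P v * (w u * m u) - w v * (P u * m u) \<partial>M) + (\<integral>u. (P v * w v) * m u \<partial>M)"
      by (rule Bochner_Integration.integral_add[OF Bochner_Integration.integrable_diff[OF Bochner_Integration.integrable_diff[OF iPwm i2] i3] i4])
    also have "(\<integral>u. P u * w u * m u - P v * (w u * m u) - w v * (P u * m u) \<partial>M)
        = (\<integral>u. P u * w u * m u - P v * (w u * m u) \<partial>M) - (\<integral>u. w v * (P u * m u) \<partial>M)"
      by (rule Bochner_Integration.integral_diff[OF Bochner_Integration.integrable_diff[OF iPwm i2] i3])
    also have "(\<integral>u. P u * w u * m u - P v * (w u * m u) \<partial>M)
        = (\<integral>u. P u * w u * m u \<partial>M) - (\<integral>u. P v * (w u * m u) \<partial>M)"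
      by (rule Bochner_Integration.integral_diff[OF iPwm i2])
    finally show ?thesis unfolding F_def A'_def Z'_def A_def Z_def
      by (simp only: integral_mult_right_zero)
  qed
  have Fle: "F v \<le> 0" for v
  proof -
    have "0 \<le> (\<integral>u. - ((P u - P v) * (w u - w v) * m u) \<partial>M)"
      using anti m0 by (intro Bochner_Integration.integral_nonneg) (simp add: mult_nonpos_nonneg)
    then show ?thesis using inner[of v] by (simp only: integral_minus)
  qed
  have outer: "(\<integral>v. F v * m v \<partial>M) = A' * Z - Z' * A - A * Z' + Z * A'"
  proof -
    have "(\<integral>v. F v * m v \<partial>M) = (\<integral>v. A' * m v - Z' * (P v * m v) - A * (w v * m v) + Z * (P v * w v * m v) \<partial>M)"
      unfolding F_def by (rule Bochner_Integration.integral_cong[OF refl]) (simp add: algebra_simps)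
    also have "\<dots> = (\<integral>v. A' * m v - Z' * (P v * m v) - A * (w v * m v) \<partial>M) + (\<integral>v. Z * (P v * w v * m v) \<partial>M)"
      by (rule Bochner_Integration.integral_add[OF Bochner_Integration.integrable_diff[OF Bochner_Integration.integrable_diff[OF i4 i3] i2] i5])
    also have "(\<integral>v. A' * m v - Z' * (P v * m v) - A * (w v * m v) \<partial>M)
       = (\<integral>v. A' * m v - Z' * (P v * m v) \<partial>M) - (\<integral>v. A * (w v * m v) \<partial>M)"
      by (rule Bochner_Integration.integral_diff[OF Bochner_Integration.integrable_diff[OF i4 i3] i2])
    also have "(\<integral>v. A' * m v - Z' * (P v * m v) \<partial>M)
       = (\<integral>v. A' * m v \<partial>M) - (\<integral>v. Z' * (P v * m v) \<partial>M)"
      by (rule Bochner_Integration.integral_diff[OF i4 i3])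
    finally show ?thesis unfolding A'_def Z'_def A_def Z_def
      by (simp only: integral_mult_right_zero)
  qed
  have "0 \<le> (\<integral>v. - (F v * m v) \<partial>M)"
    using Fle m0 by (intro Bochner_Integration.integral_nonneg) (simp add: mult_nonpos_nonneg)
  then have "A' * Z - Z' * A - A * Z' + Z * A' \<le> 0" using outer by (simp only: integral_minus)
  moreover have "A' * Z - Z' * A - A * Z' + Z * A' = 2 * (A' * Z - A * Z')" by (simp add: algebra_simps)
  ultimately have "A' * Z \<le> A * Z'" by (smt (verit))
  then show ?thesis unfolding A'_def Z'_def A_def Z_def .
qed



lemma cont_mv[continuous_intros]: "continuous_on S f \<Longrightarrow> continuous_on S (\<lambda>x. (A::real^'n^'m) *v f x)"
  by (rule continuous_on_compose2[OF matrix_vector_mult_linear_continuous_on]) auto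

lemma cont_wn[continuous_intros]: "continuous_on S f \<Longrightarrow> continuous_on S (\<lambda>x. wnorm2 A (f x))"
  unfolding wnorm2_def by (intro continuous_intros)

lemma cont_meas: "continuous_on UNIV f \<Longrightarrow> f \<in> borel_measurable (lborel::('a::euclidean_space) measure)"
  by (simp add: borel_measurable_continuous_onI)

lemma exp_poly_bound:
  fixes lam r :: real assumes "lam > 0" "r \<ge> 0"
  shows "(1 + r) * exp (- (lam/4) * r) \<le> (1 + 8/lam) * exp (- (lam/8) * r)"
proof -
  have e: "1 + lam * r / 8 \<le> exp (lam * r / 8)" using exp_ge_add_one_self[of "lam * r / 8"] by simp
  have "1 + r \<le> (1 + 8/lam) * (1 + lam * r / 8)"
    using assms by (simp add: field_simps)
  also have "\<dots> \<le> (1 + 8/lam) * exp (lam * r / 8)"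
    using e assms by (intro mult_left_mono) auto
  finally have h: "1 + r \<le> (1 + 8/lam) * exp (lam * r / 8)" .
  have "(1 + r) * exp (- (lam/4) * r) \<le> (1 + 8/lam) * exp (lam * r / 8) * exp (- (lam/4) * r)"
    using h by (intro mult_right_mono) auto
  also have "\<dots> = (1 + 8/lam) * exp (- (lam/8) * r)"
    by (simp add: mult.assoc exp_add[symmetric])
  finally show ?thesis .
qed

theorem lemma4p3:
  fixes G :: "real^'l \<Rightarrow> real^'k"
    and y :: "real^'k" and u0 :: "real^'l"
    and Gam :: "real^'k^'k" and Gam0 :: "real^'l^'l"
    and Lam :: real
  assumes "spd Gam" and "spd Gam0"
    and "C2 G"
    and "Lam > 0"
    and "\<And>u. opnorm2 (jac G u) \<le> Lam"
    and "\<And>u. opnorm2 (hess (\<lambda>v. wnorm2 Gam (G v)) u) \<le> Lam"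
    and "\<And>u i. opnorm2 (dpart (jac G) u i) \<le> Lam"
  shows "\<forall>s t. 0 \<le> s \<longrightarrow> s \<le> t \<longrightarrow> t \<le> 1 \<longrightarrow>
           misfit_exp G y Gam u0 Gam0 t \<le> misfit_exp G y Gam u0 Gam0 s"
proof (intro allI impI)
  fix s t :: real assume st: "0 \<le> s" "s \<le> t" "t \<le> 1"
  define Phi where "Phi u = wnorm2 Gam (y - G u)" for u
  define gg where "gg u = exp (- wnorm2 Gam0 (u - u0) / 2)" for u
  define S where "S = sqrt ((2 * pi) ^ CARD('l) * det Gam0)"
  define e where "e \<tau> u = exp (- \<tau> / 2 * Phi u)" for \<tau> u
  have Phi0: "0 \<le> Phi u" for u unfolding Phi_def by (rule spd_wnorm_nonneg[OF assms(1)])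
  have Gd: "\<And>u. G differentiable at u" using assms(3) unfolding C2_def by blast
  have Gcont: "continuous_on UNIV G"
    by (rule differentiable_imp_continuous_on) (simp add: differentiable_on_def Gd)
  have Phicont: "continuous_on UNIV Phi" unfolding Phi_def by (intro continuous_intros Gcont)
  have ggcont: "continuous_on UNIV gg" unfolding gg_def by (intro continuous_intros) auto
  have econt: "continuous_on UNIV (e \<tau>)" for \<tau> unfolding e_def by (intro continuous_intros Phicont)
  have gg0: "0 < gg u" for u unfolding gg_def by simp
  have e0: "0 < e \<tau> u" for \<tau> u unfolding e_def by simp
  have e1: "e \<tau> u \<le> 1" if "\<tau> \<ge> 0" for \<tau> u
    unfolding e_def using that Phi0[of u] by (simp add: mult_nonneg_nonneg)
  have lip: "norm (G u - G 0) \<le> Lam * norm u" for u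
  proof -
    have "norm (G u - G 0) \<le> Lam * norm (u - 0)"
    proof (rule differentiable_bound[OF convex_UNIV, of G "\<lambda>x h. jac G x *v h"])
      show "(G has_derivative (\<lambda>h. jac G x *v h)) (at x within UNIV)" for x
        using Gd[of x] jacobian_works unfolding jac_def by blast
      show "onorm (\<lambda>h. jac G x *v h) \<le> Lam" for x using assms(5)[of x] unfolding opnorm2_def .
    qed auto
    then show ?thesis by simp
  qed
  obtain B where B: "B > 0" "\<And>x. norm (matrix_inv Gam *v x) \<le> norm x * B"
    using bounded_linear.pos_bounded[OF matrix_vector_mul_bounded_linear[of "matrix_inv Gam"]] by blast
  define a where "a = norm (y - G 0)"
  define K1 where "K1 = 2 * B * (a^2 + Lam^2)"
  have K1: "K1 \<ge> 0" unfolding K1_def using B by simp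
  have Phile: "Phi u \<le> K1 * (1 + (norm u)^2)" for u
  proof -
    have "Phi u \<le> norm (y - G u) * norm (matrix_inv Gam *v (y - G u))"
      unfolding Phi_def wnorm2_def by (rule norm_cauchy_schwarz)
    also have "\<dots> \<le> norm (y - G u) * (norm (y - G u) * B)"
      using B(2) by (intro mult_left_mono) auto
    also have "\<dots> = B * (norm (y - G u))^2" by (simp add: power2_eq_square)
    finally have 1: "Phi u \<le> B * (norm (y - G u))^2" .
    have "y - G u = (y - G 0) - (G u - G 0)" by simp
    then have "norm (y - G u) \<le> norm (y - G 0) + norm (G u - G 0)"
      by (metis norm_triangle_ineq4)
    then have n: "norm (y - G u) \<le> a + Lam * norm u" using lip[of u] unfolding a_def by linarith
    have "(norm (y - G u))^2 \<le> (a + Lam * norm u)^2"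
      using n by (intro power_mono) auto
    also have "\<dots> \<le> 2 * (a^2 + Lam^2 * (norm u)^2)"
    proof -
      have "0 \<le> (a - Lam * norm u)^2" by simp
      then show ?thesis by (simp add: power2_diff power2_sum power_mult_distrib)
    qed
    finally have sq: "(norm (y - G u))^2 \<le> 2 * (a^2 + Lam^2 * (norm u)^2)" .
    have "Phi u \<le> B * (2 * (a^2 + Lam^2 * (norm u)^2))"
      using order_trans[OF 1 mult_left_mono[OF sq]] B(1) by simp
    also have "\<dots> \<le> K1 * (1 + (norm u)^2)"
      unfolding K1_def using B(1) by (simp add: algebra_simps)
    finally show ?thesis .
  qed
  obtain lam where lam: "lam > 0" "\<And>x. wnorm2 Gam0 x \<ge> lam * (norm x)^2"
    using spd_wnorm_lower[OF assms(2)] by blast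
  define E0 where "E0 = exp (lam * (norm u0)^2 / 2)"
  have ggle: "gg u \<le> E0 * exp (- (lam/4) * (norm u)^2)" for u
  proof -
    have "norm u \<le> norm (u - u0) + norm u0" using norm_triangle_sub[of u u0] by simp
    then have "(norm u)^2 \<le> (norm (u - u0) + norm u0)^2" by (intro power_mono) auto
    also have "\<dots> \<le> 2 * (norm (u - u0))^2 + 2 * (norm u0)^2"
    proof -
      have "0 \<le> (norm (u - u0) - norm u0)^2" by simp
      then show ?thesis by (simp add: power2_diff power2_sum)
    qed
    finally have "(norm u)^2 \<le> 2 * (norm (u - u0))^2 + 2 * (norm u0)^2" .
    then have "lam * ((norm u)^2 / 2 - (norm u0)^2) \<le> lam * (norm (u - u0))^2"
      using lam(1) by (intro mult_left_mono) auto
    also have "\<dots> \<le> wnorm2 Gam0 (u - u0)" by (rule lam(2))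
    finally have "- wnorm2 Gam0 (u - u0) / 2 \<le> lam * (norm u0)^2 / 2 + (- (lam/4) * (norm u)^2)"
      by (simp add: algebra_simps)
    then show ?thesis unfolding gg_def E0_def exp_add[symmetric] by simp
  qed
  have gaussI: "integrable lborel (\<lambda>u::real^'l. C * exp (- c * (norm u)^2))" if "c > 0" for C c
    using gaussn_integrable[OF that] by (rule integrable_mult_right)
  have igg: "integrable lborel gg"
  proof (rule Bochner_Integration.integrable_bound[OF gaussI[of "lam/4" E0]])
    show "lam / 4 > 0" using lam by simp
    show "gg \<in> borel_measurable lborel" by (rule cont_meas[OF ggcont])
    show "AE x in lborel. norm (gg x) \<le> norm (E0 * exp (- (lam / 4) * (norm x)\<^sup>2))"
      using ggle gg0 by (intro AE_I2) (simp add: E0_def less_imp_le)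
  qed
  have iPgg: "integrable lborel (\<lambda>u. Phi u * gg u)"
  proof (rule Bochner_Integration.integrable_bound[OF gaussI[of "lam/8" "K1 * E0 * (1 + 8/lam)"]])
    show "lam / 8 > 0" using lam by simp
    show "(\<lambda>u. Phi u * gg u) \<in> borel_measurable lborel"
      by (rule cont_meas) (intro continuous_intros Phicont ggcont)
    show "AE x in lborel. norm (Phi x * gg x) \<le> norm (K1 * E0 * (1 + 8/lam) * exp (- (lam / 8) * (norm x)\<^sup>2))"
    proof (intro AE_I2)
      fix x
      have "Phi x * gg x \<le> (K1 * (1 + (norm x)^2)) * (E0 * exp (- (lam/4) * (norm x)^2))"
        using Phile[of x] ggle[of x] Phi0[of x] gg0[of x] K1 by (intro mult_mono) auto
      also have "\<dots> = K1 * E0 * ((1 + (norm x)^2) * exp (- (lam/4) * (norm x)^2))" by simp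
      also have "\<dots> \<le> K1 * E0 * ((1 + 8/lam) * exp (- (lam/8) * (norm x)^2))"
        using exp_poly_bound[OF lam(1), of "(norm x)^2"] K1 by (intro mult_left_mono) (auto simp: E0_def)
      finally have "Phi x * gg x \<le> K1 * E0 * (1 + 8/lam) * exp (- (lam / 8) * (norm x)\<^sup>2)" by simp
      moreover have "0 \<le> Phi x * gg x" using Phi0[of x] gg0[of x] by simp
      ultimately show "norm (Phi x * gg x) \<le> norm (K1 * E0 * (1 + 8/lam) * exp (- (lam / 8) * (norm x)\<^sup>2))"
        by simp
    qed
  qed
  have ieg: "integrable lborel (\<lambda>u. e \<tau> u * gg u)" if "\<tau> \<ge> 0" for \<tau>
  proof (rule Bochner_Integration.integrable_bound[OF igg])
    show "(\<lambda>u. e \<tau> u * gg u) \<in> borel_measurable lborel"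
      by (rule cont_meas) (intro continuous_intros econt ggcont)
    show "AE x in lborel. norm (e \<tau> x * gg x) \<le> norm (gg x)"
      using e0 e1[OF that] gg0 by (intro AE_I2) (simp add: abs_mult less_imp_le mult_left_le_one_le)
  qed
  have iPeg: "integrable lborel (\<lambda>u. Phi u * (e \<tau> u * gg u))" if "\<tau> \<ge> 0" for \<tau>
  proof (rule Bochner_Integration.integrable_bound[OF iPgg])
    show "(\<lambda>u. Phi u * (e \<tau> u * gg u)) \<in> borel_measurable lborel"
      by (rule cont_meas) (intro continuous_intros econt ggcont Phicont)
    show "AE x in lborel. norm (Phi x * (e \<tau> x * gg x)) \<le> norm (Phi x * gg x)"
    proof (intro AE_I2)
      fix x
      have "Phi x * (e \<tau> x * gg x) \<le> Phi x * gg x"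
        using e0[of \<tau> x] e1[OF that, of x] gg0[of x] Phi0[of x]
        by (intro mult_left_mono) (auto simp: mult_left_le_one_le less_imp_le)
      moreover have "0 \<le> Phi x * (e \<tau> x * gg x)" using e0[of \<tau> x] gg0[of x] Phi0[of x] by simp
      ultimately show "norm (Phi x * (e \<tau> x * gg x)) \<le> norm (Phi x * gg x)" by simp
    qed
  qed
  define Aq where "Aq \<tau> = (\<integral>u. Phi u * (e \<tau> u * gg u) \<partial>lborel)" for \<tau>
  define Zq where "Zq \<tau> = (\<integral>u. e \<tau> u * gg u \<partial>lborel)" for \<tau>
  have Zpos: "Zq \<tau> > 0" if "\<tau> \<ge> 0" for \<tau>
    unfolding Zq_def using ieg[OF that] e0 gg0 by (intro integral_pos_lborel) auto
  have Zc_eq: "Zc G y Gam u0 Gam0 \<tau> = Zq \<tau> / S" for \<tau>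
  proof -
    have "Zc G y Gam u0 Gam0 \<tau> = (\<integral>u. e \<tau> u * gg u / S \<partial>lborel)"
      unfolding Zc_def gauss_pdf_def e_def gg_def S_def Phi_def by simp
    then show ?thesis unfolding Zq_def by simp
  qed
  have mis_eq: "misfit_exp G y Gam u0 Gam0 \<tau> = Aq \<tau> / (S * (Zq \<tau> / S))" for \<tau>
  proof -
    have "misfit_exp G y Gam u0 Gam0 \<tau> = (\<integral>u. Phi u * (e \<tau> u * gg u) / (S * (Zq \<tau> / S)) \<partial>lborel)"
      unfolding misfit_exp_def rho_def Zc_eq[symmetric]
      unfolding gauss_pdf_def e_def gg_def S_def Phi_def by simp
    then show ?thesis unfolding Aq_def by simp
  qed
  show "misfit_exp G y Gam u0 Gam0 t \<le> misfit_exp G y Gam u0 Gam0 s"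
  proof (cases "S = 0")
    case True
    then show ?thesis unfolding mis_eq by simp
  next
    case False
    have mq: "misfit_exp G y Gam u0 Gam0 \<tau> = Aq \<tau> / Zq \<tau>" for \<tau>
      unfolding mis_eq using False by simp
    define w where "w u = exp (- (t - s) / 2 * Phi u)" for u
    have wm: "w u * (e s u * gg u) = e t u * gg u" for u
    proof -
      have "- (t - s) / 2 * Phi u + - s / 2 * Phi u = - t / 2 * Phi u"
        by (simp add: field_simps)
      then have "w u * e s u = e t u" unfolding w_def e_def exp_add[symmetric]
        by simp
      then show ?thesis by (simp add: mult.assoc[symmetric])
    qed
    have c: "(\<integral>x. Phi x * w x * (e s x * gg x) \<partial>lborel) * (\<integral>x. e s x * gg x \<partial>lborel)
        \<le> (\<integral>x. Phi x * (e s x * gg x) \<partial>lborel) * (\<integral>x. w x * (e s x * gg x) \<partial>lborel)"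
    proof (rule cheb)
      show "integrable lborel (\<lambda>x. e s x * gg x)" by (rule ieg[OF st(1)])
      show "integrable lborel (\<lambda>x. Phi x * (e s x * gg x))" by (rule iPeg[OF st(1)])
      show "w \<in> borel_measurable lborel" unfolding w_def by (rule cont_meas) (intro continuous_intros Phicont)
      show "0 \<le> e s x * gg x" for x using e0[of s x] gg0[of x] by simp
      show "0 \<le> w x" for x unfolding w_def by simp
      show "w x \<le> 1" for x
      proof -
        have "(s - t) * Phi x \<le> 0" using st Phi0[of x] by (intro mult_nonpos_nonneg) auto
        then show ?thesis unfolding w_def by simp
      qed
      show "(Phi u - Phi v) * (w u - w v) \<le> 0" for u v
      proof (cases "Phi u \<le> Phi v")
        case True
        have "- (t - s) / 2 * Phi v \<le> - (t - s) / 2 * Phi u"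
          by (rule mult_left_mono_neg) (use True st in auto)
        then have "w v \<le> w u" unfolding w_def by simp
        then show ?thesis using True by (simp add: mult_nonpos_nonneg)
      next
        case False
        have "- (t - s) / 2 * Phi u \<le> - (t - s) / 2 * Phi v"
          by (rule mult_left_mono_neg) (use False st in auto)
        then have "w u \<le> w v" unfolding w_def by simp
        then show ?thesis using False by (simp add: mult_nonneg_nonpos)
      qed
    qed
    have "(\<lambda>x. Phi x * w x * (e s x * gg x)) = (\<lambda>x. Phi x * (e t x * gg x))"
    proof
      fix x show "Phi x * w x * (e s x * gg x) = Phi x * (e t x * gg x)"
        using wm[of x] by (metis mult.assoc)
    qed
    moreover have "(\<lambda>x. w x * (e s x * gg x)) = (\<lambda>x. e t x * gg x)" using wm by (rule ext)
    ultimately have "Aq t * Zq s \<le> Aq s * Zq t" using c unfolding Aq_def Zq_def by simp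
    moreover have "Zq s > 0" "Zq t > 0" using Zpos st by auto
    ultimately show ?thesis unfolding mq by (simp add: field_simps)
  qed
qed


end
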